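(* Let $d\ge2$, let $\mathcal{S}$ be a simple-minded system of $A_n^{dn}$-$\underline{\mathrm{mod}}$ with associated permutation $\sigma$. For $a\in\underline{n}$ with $\sigma$-orbit of size $s_a$ and $0\le j\le s_a-1$, write the object of $\mathcal{S}$ with top $S_{\sigma^j(a)}$ as $M^{\sigma^j(a)}_{\sigma^{j+1}(a),l_{aj}}$. Suppose there exists $i$ with $l_{ij}=d-1$ for all $0\le j\le s_i-1$. Then for every $s$ whose $\sigma$-orbit differs from that of $i$, there is exactly one $t\in\{0,\dots,s_s-1\}$ with $l_{st}=0$.
   Context: $A_n^{dn}=kQ/I$ ($k$ algebraically closed), $Q$ the cyclic quiver with vertices $1,\dots,n$ and arrows $i\to i+1$, $n\to1$, $I$ generated by all paths of length $dn+1$. $M^a_{b,t}$ is the indecomposable (uniserial) module with top $S_a$, socle $S_b$, and $S_a$ occurring $t+1$ times as composition factor. $\underline{\mathrm{Hom}}$ is Hom modulo maps factoring through projectives. A simple-minded system (sms) is a family $\mathcal{S}$ of indecomposable non-projective modules with $\underline{\mathrm{Hom}}(S,T)=0$ for distinct $S,T\in\mathcal{S}$, $\underline{\mathrm{Hom}}(S,S)\cong k$, and such that each indecomposable non-projective $X$ has $\underline{\mathrm{Hom}}(X,S)\neq0$ for some $S\in\mathcal{S}$. For an sms each simple is the top of exactly one and the socle of exactly one object; the associated permutation $\sigma$ of $\underline{n}=\{1,\dots,n\}$ is $\sigma(a)=b$ if some object has top $S_a$ and socle $S_b$. *)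

theory Defs
  imports Main
begin

text \<open>Combinatorial model of the indecomposable modules of the self-injective
Nakayama algebra A_n^{dn} = kQ/I (cyclic quiver 1 -> 2 -> ... -> n -> 1, all
paths of length dn+1 zero).  Every indecomposable module is uniserial and is
determined by its top S_a (a in {1..n}) and its length l, 1 <= l <= dn+1;
its composition factors from top to socle are S_a, S_(a+1), ..., S_(a+l-1)
(indices modulo n).  We represent it by the pair (a, l).\<close>

type_synonym nmod = "nat \<times> nat"

definition loewy :: "nat \<Rightarrow> nat \<Rightarrow> nat" where
  "loewy n d = d * n + 1"

definition is_ind :: "nat \<Rightarrow> nat \<Rightarrow> nmod \<Rightarrow> bool" where
  "is_ind n d X \<longleftrightarrow> fst X \<in> {1..n} \<and> 1 \<le> snd X \<and> snd X \<le> loewy n d"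

text \<open>indecomposable non-projective module (the projectives are those of length dn+1)\<close>
definition is_ind_nonproj :: "nat \<Rightarrow> nat \<Rightarrow> nmod \<Rightarrow> bool" where
  "is_ind_nonproj n d X \<longleftrightarrow> fst X \<in> {1..n} \<and> 1 \<le> snd X \<and> snd X \<le> d * n"

definition top_of :: "nmod \<Rightarrow> nat" where
  "top_of X = fst X"

text \<open>index of the socle: S_(a+l-1), labels taken in {1..n}\<close>
definition soc_of :: "nat \<Rightarrow> nmod \<Rightarrow> nat" where
  "soc_of n X = ((fst X + snd X - 2) mod n) + 1"

text \<open>the number t such that the top occurs t+1 times as composition factor\<close>
definition tmult :: "nat \<Rightarrow> nmod \<Rightarrow> nat" where
  "tmult n X = (snd X - 1) div n"

text \<open>M^a_{b,t}: top S_a, socle S_b, S_a occurring t+1 times.\<close>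
definition Mab :: "nat \<Rightarrow> nat \<Rightarrow> nat \<Rightarrow> nat \<Rightarrow> nmod" where
  "Mab n a b t = (a, t * n + nat ((int b - int a) mod int n) + 1)"

text \<open>Dimension of the stable Hom space \<underline>Hom((a,l),(b,m)).  A basis of
Hom((a,l),(b,m)) is given by the maps with image the uniserial module of top
S_a and length k, where 1 <= k <= min l m and a + k = b + m (mod n); such a
map factors through a projective iff k + (dn+1) <= l + m.\<close>
definition shom_dim :: "nat \<Rightarrow> nat \<Rightarrow> nmod \<Rightarrow> nmod \<Rightarrow> nat" where
  "shom_dim n d X Y = card {k. 1 \<le> k \<and> k \<le> min (snd X) (snd Y)
       \<and> snd X + snd Y < k + loewy n d
       \<and> (fst X + k) mod n = (fst Y + snd Y) mod n}"

definition is_sms :: "nat \<Rightarrow> nat \<Rightarrow> nmod set \<Rightarrow> bool" where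
  "is_sms n d S \<longleftrightarrow>
     (\<forall>X\<in>S. is_ind_nonproj n d X) \<and>
     (\<forall>X\<in>S. \<forall>Y\<in>S. X \<noteq> Y \<longrightarrow> shom_dim n d X Y = 0) \<and>
     (\<forall>X\<in>S. shom_dim n d X X = 1) \<and>
     (\<forall>X. is_ind_nonproj n d X \<longrightarrow> (\<exists>Y\<in>S. shom_dim n d X Y \<noteq> 0))"

definition obj_top :: "nmod set \<Rightarrow> nat \<Rightarrow> nmod" where
  "obj_top S a = (THE X. X \<in> S \<and> top_of X = a)"

definition sms_perm :: "nat \<Rightarrow> nmod set \<Rightarrow> nat \<Rightarrow> nat" where
  "sms_perm n S a = soc_of n (obj_top S a)"

definition orbit_size :: "nat \<Rightarrow> nmod set \<Rightarrow> nat \<Rightarrow> nat" where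
  "orbit_size n S a = (LEAST p. 0 < p \<and> (sms_perm n S ^^ p) a = a)"

definition sorbit :: "nat \<Rightarrow> nmod set \<Rightarrow> nat \<Rightarrow> nat set" where
  "sorbit n S a = {(sms_perm n S ^^ k) a | k. True}"

text \<open>l_{aj}: the object of S with top S_(sigma^j a) is M^(sigma^j a)_(sigma^(j+1) a, l_{aj})\<close>
definition lval :: "nat \<Rightarrow> nmod set \<Rightarrow> nat \<Rightarrow> nat \<Rightarrow> nat" where
  "lval n S a j = tmult n (obj_top S ((sms_perm n S ^^ j) a))"

end

theory Submission imports Defs begin

lemma eq_of_dvd_int:
  fixes a b n :: int
  assumes "n dvd (a - b)" "0 \<le> a" "a < n" "0 \<le> b" "b < n"
  shows "a = b"
proof (rule ccontr)
  assume "a \<noteq> b"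
  then have "\<bar>n\<bar> \<le> \<bar>a - b\<bar>" using dvd_imp_le_int assms(1) by simp
  then show False using assms by linarith
qed

lemma eq_of_dvd_pos:
  fixes a b n :: nat
  assumes "int n dvd (int a - int b)" "1 \<le> a" "a \<le> n" "1 \<le> b" "b \<le> n"
  shows "a = b"
proof -
  have "int n dvd ((int a - 1) - (int b - 1))" using assms(1) by simp
  then have "int a - 1 = int b - 1" by (rule eq_of_dvd_int) (use assms in auto)
  then show ?thesis by simp
qed

lemma soc_cong:
  assumes "1 \<le> fst X" "1 \<le> snd X" "1 \<le> n"
  shows "int n dvd (int (soc_of n X) - int (fst X) - int (snd X) + 1)"
proof -
  define x where "x = int (fst X) + int (snd X) - 2"
  have e: "int (fst X + snd X - 2) = x" using assms by (simp add: x_def)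
  have "int (soc_of n X) = int ((fst X + snd X - 2) mod n) + 1" by (simp add: soc_of_def)
  also have "\<dots> = x mod int n + 1" by (simp add: of_nat_mod e[symmetric])
  finally have "int (soc_of n X) - int (fst X) - int (snd X) + 1 = - (x - x mod int n)" by (simp add: x_def)
  moreover have "int n dvd (x - x mod int n)" by (rule dvd_minus_mod)
  ultimately show ?thesis by (metis dvd_minus_iff minus_diff_eq)
qed

lemma hom_nz_int:
  fixes X Y :: nmod and k :: int
  assumes "1 \<le> k" "k \<le> int (snd X)" "k \<le> int (snd Y)"
    "int (snd X) + int (snd Y) < k + int d * int n + 1"
    "int n dvd (int (fst X) + k - int (fst Y) - int (snd Y))"
  shows "shom_dim n d X Y \<noteq> 0"
proof -
  define kk where "kk = nat k"
  have kk: "int kk = k" using assms(1) by (simp add: kk_def)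
  have m: "(fst X + kk) mod n = (fst Y + snd Y) mod n"
  proof -
    have "int n dvd (int (fst X + kk) - int (fst Y + snd Y))" using assms(5) kk by (simp add: algebra_simps)
    then have "int (fst X + kk) mod int n = int (fst Y + snd Y) mod int n"
      by (simp add: mod_eq_dvd_iff)
    then show ?thesis by (metis of_nat_eq_iff of_nat_mod)
  qed
  have a1: "1 \<le> kk" "kk \<le> snd X" "kk \<le> snd Y" using assms(1-3) kk by linarith+
  have "int (snd X + snd Y) < int (kk + loewy n d)" using assms(4) kk unfolding loewy_def by simp
  then have a2: "snd X + snd Y < kk + loewy n d" by linarith
  have mem: "kk \<in> {k. 1 \<le> k \<and> k \<le> min (snd X) (snd Y)
       \<and> snd X + snd Y < k + loewy n d
       \<and> (fst X + k) mod n = (fst Y + snd Y) mod n}"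
    using a1 a2 m by simp
  have fin: "finite {k. 1 \<le> k \<and> k \<le> min (snd X) (snd Y)
       \<and> snd X + snd Y < k + loewy n d
       \<and> (fst X + k) mod n = (fst Y + snd Y) mod n}"
    by (rule finite_subset[of _ "{..snd X}"]) auto
  show ?thesis unfolding shom_dim_def using card_0_eq[OF fin] mem by blast
qed

lemma nat_mod_dvd: "(x::nat) mod n = y mod n \<Longrightarrow> int n dvd (int x - int y)"
proof -
  assume "x mod n = y mod n"
  then have "int (x mod n) = int (y mod n)" by simp
  then have "int x mod int n = int y mod int n" by (simp only: of_nat_mod)
  then show ?thesis by (simp add: mod_eq_dvd_iff)
qed

lemma soc_range: "1 \<le> n \<Longrightarrow> soc_of n X \<in> {1..n}"
  unfolding soc_of_def by (simp add: Suc_leI)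

locale smsctx =
  fixes n d :: nat and S :: "nmod set"
  assumes n1: "1 \<le> n" and d2: "2 \<le> d" and sms: "is_sms n d S"
begin

lemma S_props: "X \<in> S \<Longrightarrow> fst X \<in> {1..n} \<and> 1 \<le> snd X \<and> snd X \<le> d * n"
  using sms unfolding is_sms_def is_ind_nonproj_def by blast
lemma S_int: "X \<in> S \<Longrightarrow> int (snd X) \<le> int d * int n"
proof -
  assume "X \<in> S"
  then have "snd X \<le> d * n" using S_props by blast
  then have "int (snd X) \<le> int (d * n)" by linarith
  then show ?thesis by simp
qed
lemma S_orth: "X \<in> S \<Longrightarrow> Y \<in> S \<Longrightarrow> X \<noteq> Y \<Longrightarrow> shom_dim n d X Y = 0"
  using sms unfolding is_sms_def by blast
lemma S_self: "X \<in> S \<Longrightarrow> shom_dim n d X X = 1"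
  using sms unfolding is_sms_def by blast
lemma S_gen: "is_ind_nonproj n d X \<Longrightarrow> \<exists>Y\<in>S. shom_dim n d X Y \<noteq> 0"
  using sms unfolding is_sms_def by blast

lemma top_unique: assumes "X \<in> S" "Y \<in> S" "fst X = fst Y" shows "X = Y"
proof (rule ccontr)
  assume ne: "X \<noteq> Y"
  have "snd X \<noteq> snd Y" using ne assms(3) by (metis prod.collapse)
  then have "snd X < snd Y \<or> snd Y < snd X" by linarith
  then show False
  proof
    assume lt: "snd X < snd Y"
    have "shom_dim n d Y X \<noteq> 0"
      by (rule hom_nz_int[where k="int (snd X)"]) (use lt S_props[OF assms(1)] S_props[OF assms(2)] S_int[OF assms(1)] S_int[OF assms(2)] assms(3) in auto)
    then show False using S_orth assms ne by metis
  next
    assume lt: "snd Y < snd X"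
    have "shom_dim n d X Y \<noteq> 0"
      by (rule hom_nz_int[where k="int (snd Y)"]) (use lt S_props[OF assms(1)] S_props[OF assms(2)] S_int[OF assms(1)] S_int[OF assms(2)] assms(3) in auto)
    then show False using S_orth assms ne by metis
  qed
qed

lemma socS: "X \<in> S \<Longrightarrow> int n dvd (int (soc_of n X) - int (fst X) - int (snd X) + 1)"
  using soc_cong S_props n1 by simp

lemma soc_unique: assumes "X \<in> S" "Y \<in> S" "soc_of n X = soc_of n Y" shows "X = Y"
proof (rule ccontr)
  assume ne: "X \<noteq> Y"
  have dv: "int n dvd (int (fst X) + int (snd X) - int (fst Y) - int (snd Y))"
  proof -
    have "int n dvd (int (soc_of n X) - int (fst X) - int (snd X) + 1) - (int (soc_of n Y) - int (fst Y) - int (snd Y) + 1)"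
      using socS assms(1,2) by (metis dvd_diff)
    then have "int n dvd - (int (fst X) + int (snd X) - int (fst Y) - int (snd Y))" using assms(3) by (simp add: algebra_simps)
    then show ?thesis by (simp only: dvd_minus_iff)
  qed
  consider "snd X < snd Y" | "snd Y < snd X" | "snd X = snd Y" by linarith
  then show False
  proof cases
    case 1
    have "shom_dim n d X Y \<noteq> 0"
      by (rule hom_nz_int[where k="int (snd X)"]) (use 1 S_props[OF assms(1)] S_props[OF assms(2)] S_int[OF assms(1)] S_int[OF assms(2)] dv in auto)
    then show False using S_orth assms ne by metis
  next
    case 2
    have dv': "int n dvd (int (fst Y) + int (snd Y) - int (fst X) - int (snd X))"
    proof -
      have "int (fst Y) + int (snd Y) - int (fst X) - int (snd X) = - (int (fst X) + int (snd X) - int (fst Y) - int (snd Y))" by simp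
      then show ?thesis using dv by (simp only: dvd_minus_iff)
    qed
    have "shom_dim n d Y X \<noteq> 0"
      by (rule hom_nz_int[where k="int (snd Y)"]) (use 2 S_props[OF assms(1)] S_props[OF assms(2)] S_int[OF assms(1)] S_int[OF assms(2)] dv' in auto)
    then show False using S_orth assms ne by metis
  next
    case 3
    then have "int n dvd (int (fst X) - int (fst Y))" using dv by simp
    then have "fst X = fst Y"
      by (rule eq_of_dvd_pos) (use S_props[OF assms(1)] S_props[OF assms(2)] in auto)
    then show False using top_unique assms ne by blast
  qed
qed


lemma fin_S: "finite S"
proof (rule finite_subset[of _ "{1..n} \<times> {1..d*n}"])
  show "S \<subseteq> {1..n} \<times> {1..d*n}" using S_props by force
qed simp

lemma dn1: "1 \<le> d * n" using n1 d2 by (simp add: Suc_le_eq)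

lemma soc_surj: assumes "a \<in> {1..n}" shows "\<exists>Y\<in>S. soc_of n Y = a"
proof -
  have "is_ind_nonproj n d (a,1)" using assms dn1 unfolding is_ind_nonproj_def by simp
  then obtain Y where Y: "Y \<in> S" "shom_dim n d (a,1) Y \<noteq> 0" using S_gen by blast
  have "{k. 1 \<le> k \<and> k \<le> min (snd (a,1)) (snd Y)
       \<and> snd (a,1) + snd Y < k + loewy n d
       \<and> (fst (a,1) + k) mod n = (fst Y + snd Y) mod n} \<noteq> {}"
    using Y(2) unfolding shom_dim_def by (intro notI) simp
  then obtain k where k: "1 \<le> k" "k \<le> 1" "(a + k) mod n = (fst Y + snd Y) mod n" by auto
  then have "(a + 1) mod n = (fst Y + snd Y) mod n" by simp
  then have d1: "int n dvd (int (a+1) - int (fst Y + snd Y))" by (rule nat_mod_dvd)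
  have d2: "int n dvd (int (soc_of n Y) - int (fst Y) - int (snd Y) + 1)" using socS Y(1) by blast
  have "int n dvd ((int (soc_of n Y) - int (fst Y) - int (snd Y) + 1) - (int (a+1) - int (fst Y + snd Y)))"
    using d2 d1 by (rule dvd_diff)
  then have "int n dvd (int (soc_of n Y) - int a)" by simp
  then have "soc_of n Y = a" by (rule eq_of_dvd_pos) (use soc_range[OF n1] assms in auto)
  then show ?thesis using Y(1) by blast
qed


lemma card_S: "card S = n"
proof -
  have "inj_on (soc_of n) S" using soc_unique by (auto simp: inj_on_def)
  moreover have "soc_of n ` S = {1..n}" using soc_surj soc_range[OF n1] by force
  ultimately have "card S = card {1..n}" using card_image by metis
  then show ?thesis by simp
qed

lemma top_surj: assumes "a \<in> {1..n}" shows "\<exists>X\<in>S. fst X = a"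
proof -
  have "inj_on fst S" using top_unique by (auto simp: inj_on_def)
  then have c: "card (fst ` S) = n" using card_S card_image by metis
  have "fst ` S \<subseteq> {1..n}" using S_props by auto
  then have "fst ` S = {1..n}" using c by (intro card_subset_eq) auto
  then have "a \<in> fst ` S" using assms by simp
  then show ?thesis by (metis imageE)
qed

abbreviation sig where "sig \<equiv> sms_perm n S"
abbreviation L where "L a \<equiv> snd (obj_top S a)"

lemma obj: assumes "a \<in> {1..n}" shows "obj_top S a \<in> S" "fst (obj_top S a) = a"
proof -
  obtain X where X: "X \<in> S" "fst X = a" using top_surj assms by blast
  have "obj_top S a = X" unfolding obj_top_def top_of_def
    by (rule the_equality) (use X top_unique in auto)
  then show "obj_top S a \<in> S" "fst (obj_top S a) = a" using X by auto
qed

lemma sig_range: "a \<in> {1..n} \<Longrightarrow> sig a \<in> {1..n}"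
  unfolding sms_perm_def using soc_range[OF n1] by blast

lemma sig_inj: assumes "a \<in> {1..n}" "b \<in> {1..n}" "sig a = sig b" shows "a = b"
proof -
  have "obj_top S a = obj_top S b" using soc_unique obj assms unfolding sms_perm_def by blast
  then show ?thesis using obj assms by metis
qed

lemma L_bounds: assumes "a \<in> {1..n}" shows "1 \<le> L a" "L a \<le> d * n" "int (L a) \<le> int d * int n"
  using S_props[OF obj(1)[OF assms]] S_int[OF obj(1)[OF assms]] by auto

lemma sig_cong: assumes "a \<in> {1..n}" shows "int n dvd (int (sig a) - int a - int (L a) + 1)"
  using socS[OF obj(1)[OF assms]] obj(2)[OF assms] unfolding sms_perm_def by simp

lemma dich: assumes "a \<in> {1..n}" shows "L a \<le> n \<or> int d * int n - int n < int (L a)"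
proof (rule ccontr)
  assume "\<not> ?thesis"
  then have h1: "n < L a" and h2: "int (L a) \<le> int d * int n - int n" by auto
  have h3: "L a + n \<le> d * n"
  proof -
    have "int (L a + n) \<le> int (d * n)" using h2 by simp
    then show ?thesis by linarith
  qed
  define X where "X = obj_top S a"
  define A where "A = {k. 1 \<le> k \<and> k \<le> min (snd X) (snd X)
       \<and> snd X + snd X < k + loewy n d
       \<and> (fst X + k) mod n = (fst X + snd X) mod n}"
  have fin: "finite A" unfolding A_def by (rule finite_subset[of _ "{..snd X}"]) auto
  have m1: "L a \<in> A" using dn1 L_bounds[OF assms] unfolding A_def X_def loewy_def by simp
  have e: "fst X + L a = (fst X + (L a - n)) + n" using h1 by simp
  have e2: "(fst X + (L a - n)) mod n = (fst X + snd X) mod n"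
    unfolding X_def by (metis e[unfolded X_def] mod_add_self2)
  have m2: "L a - n \<in> A" unfolding A_def using h1 h3 e2 unfolding X_def loewy_def by (simp, arith)
  have "{L a - n, L a} \<subseteq> A" using m1 m2 by auto
  then have "card {L a - n, L a} \<le> card A" using fin by (rule card_mono[rotated])
  moreover have "card {L a - n, L a} = 2"
  proof -
    have "L a - n \<noteq> L a" using h1 n1 by simp
    then show ?thesis by simp
  qed
  moreover have "card A = 1" using S_self[OF obj(1)[OF assms]] unfolding A_def X_def shom_dim_def by simp
  ultimately show False by simp
qed


lemma pow_range: "a \<in> {1..n} \<Longrightarrow> (sig ^^ k) a \<in> {1..n}"
proof (induction k)
  case 0 then show ?case by simp
next
  case (Suc k) then show ?case using sig_range by simp
qed

lemma pow_inj: "a \<in> {1..n} \<Longrightarrow> b \<in> {1..n} \<Longrightarrow> (sig ^^ k) a = (sig ^^ k) b \<Longrightarrow> a = b"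
proof (induction k)
  case 0 then show ?case by simp
next
  case (Suc k)
  have "sig ((sig ^^ k) a) = sig ((sig ^^ k) b)" using Suc.prems by simp
  then have "(sig ^^ k) a = (sig ^^ k) b" using sig_inj[OF pow_range pow_range] Suc.prems by blast
  then show ?case using Suc by blast
qed

lemma pow_split: "(sig ^^ (i + j)) a = (sig ^^ i) ((sig ^^ j) a)"
  by (simp add: funpow_add)

lemma pow_period: assumes "a \<in> {1..n}" shows "\<exists>p>0. (sig ^^ p) a = a"
proof -
  let ?f = "\<lambda>k. (sig ^^ k) a"
  have "\<not> inj_on ?f {0..n}"
  proof
    assume "inj_on ?f {0..n}"
    then have c: "card (?f ` {0..n}) = n + 1" by (simp add: card_image)
    have "?f ` {0..n} \<subseteq> {1..n}" using pow_range assms by auto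
    then have "card (?f ` {0..n}) \<le> n" using card_mono[of "{1..n}"] by fastforce
    then show False using c by simp
  qed
  then obtain i j where ij: "i \<noteq> j" "?f i = ?f j" unfolding inj_on_def by blast
  then obtain i j where ij: "i < j" "?f i = ?f j"
  proof (cases "i < j")
    case True then show ?thesis using that ij by blast
  next
    case False then have "j < i" using ij by simp
    then show ?thesis using that ij by metis
  qed
  have "?f j = (sig ^^ i) ((sig ^^ (j - i)) a)" using pow_split[of i "j - i" a] ij(1) by simp
  then have "(sig ^^ i) ((sig ^^ (j - i)) a) = (sig ^^ i) a" using ij by simp
  then have "(sig ^^ (j - i)) a = a" using pow_inj pow_range assms by blast
  then show ?thesis using ij(1) by (intro exI[of _ "j - i"]) simp
qed

lemma os_props: assumes "a \<in> {1..n}"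
  shows "0 < orbit_size n S a" "(sig ^^ orbit_size n S a) a = a"
proof -
  have "0 < orbit_size n S a \<and> (sig ^^ orbit_size n S a) a = a"
    unfolding orbit_size_def using pow_period[OF assms] by (rule LeastI_ex)
  then show "0 < orbit_size n S a" "(sig ^^ orbit_size n S a) a = a" by auto
qed

lemma pow_mult: assumes "(sig ^^ p) a = a" shows "(sig ^^ (p * m)) a = a"
proof (induction m)
  case 0 then show ?case by simp
next
  case (Suc m)
  have "(sig ^^ (p * Suc m)) a = (sig ^^ (p * m)) ((sig ^^ p) a)"
    using pow_split[of "p*m" p a] by (simp add: add.commute)
  then show ?case using Suc assms by simp
qed

lemma pow_mod: assumes "a \<in> {1..n}"
  shows "(sig ^^ k) a = (sig ^^ (k mod orbit_size n S a)) a"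
proof -
  let ?p = "orbit_size n S a"
  have "(sig ^^ k) a = (sig ^^ (k mod ?p + ?p * (k div ?p))) a" by simp
  also have "\<dots> = (sig ^^ (k mod ?p)) ((sig ^^ (?p * (k div ?p))) a)" by (rule pow_split)
  also have "\<dots> = (sig ^^ (k mod ?p)) a" using pow_mult os_props(2)[OF assms] by simp
  finally show ?thesis .
qed

lemma pow_distinct: assumes "a \<in> {1..n}" "t1 < orbit_size n S a" "t2 < orbit_size n S a"
  "(sig ^^ t1) a = (sig ^^ t2) a" shows "t1 = t2"
proof (rule ccontr)
  assume "t1 \<noteq> t2"
  then have "t1 < t2 \<or> t2 < t1" by linarith
  then obtain i j where ij: "i < j" "j < orbit_size n S a" "(sig ^^ i) a = (sig ^^ j) a"
    using assms by auto
  have "(sig ^^ j) a = (sig ^^ i) ((sig ^^ (j - i)) a)" using pow_split[of i "j - i" a] ij(1) by simp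
  then have "(sig ^^ i) ((sig ^^ (j - i)) a) = (sig ^^ i) a" using ij by simp
  then have "(sig ^^ (j - i)) a = a" using pow_inj pow_range assms by blast
  then have "orbit_size n S a \<le> j - i" unfolding orbit_size_def using ij(1) by (intro Least_le) simp
  then show False using ij by simp
qed

lemma orbit_sep: assumes "a \<in> {1..n}" "sorbit n S s \<noteq> sorbit n S a" shows "(sig ^^ k) a \<noteq> s"
proof
  assume sk: "(sig ^^ k) a = s"
  let ?p = "orbit_size n S a"
  have "sorbit n S s \<subseteq> sorbit n S a"
  proof
    fix x assume "x \<in> sorbit n S s"
    then obtain m where "x = (sig ^^ m) s" unfolding sorbit_def by blast
    then have "x = (sig ^^ (m + k)) a" using sk pow_split by simp
    then show "x \<in> sorbit n S a" unfolding sorbit_def by blast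
  qed
  moreover have "sorbit n S a \<subseteq> sorbit n S s"
  proof
    fix x assume "x \<in> sorbit n S a"
    then obtain m where x: "x = (sig ^^ m) a" unfolding sorbit_def by blast
    have p1: "1 \<le> ?p" using os_props(1)[OF assms(1)] by simp
    have kk: "k \<le> ?p * k" using p1 by simp
    have e: "m + ?p * k = (m + ?p * k - k) + k" using kk by linarith
    have "x = (sig ^^ m) ((sig ^^ (?p * k)) a)" using x pow_mult os_props(2)[OF assms(1)] by simp
    also have "\<dots> = (sig ^^ (m + ?p * k)) a" using pow_split by simp
    also have "\<dots> = (sig ^^ ((m + ?p * k - k) + k)) a" using e by simp
    also have "\<dots> = (sig ^^ (m + ?p * k - k)) s" using pow_split sk by simp
    finally show "x \<in> sorbit n S s" unfolding sorbit_def by blast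
  qed
  ultimately show False using assms(2) by blast
qed

definition uu :: "nat \<Rightarrow> nat \<Rightarrow> int" where "uu A c = (int A - int c) mod int n"
definition gg :: "nat \<Rightarrow> int" where "gg A = int d * int n + 1 - int (L A)"

lemma n_pos: "0 < int n" using n1 by simp
lemma dn2: "2 * int n \<le> int d * int n"
proof -
  have "2 * n \<le> d * n" using d2 by simp
  then have "int (2 * n) \<le> int (d * n)" by linarith
  then show ?thesis by simp
qed

lemma uu_range: "0 \<le> uu A c" "uu A c < int n"
  unfolding uu_def using n_pos by auto

lemma uu_dvd: "int n dvd (int A - int c - uu A c)"
  unfolding uu_def by (rule dvd_minus_mod)

lemma uu_val: assumes "int n dvd (int A - int c - v)" "0 \<le> v" "v < int n" shows "uu A c = v"
proof (rule eq_of_dvd_int[of "int n"])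
  have "int n dvd ((int A - int c - v) - (int A - int c - uu A c))" using assms(1) uu_dvd[of A c] by (rule dvd_diff)
  then show "int n dvd uu A c - v" by simp
qed (use assms uu_range in auto)

lemma uu_self: "uu A A = 0" unfolding uu_def by simp

lemma uu_inj: assumes "c1 \<in> {1..n}" "c2 \<in> {1..n}" "uu A c1 = uu A c2" shows "c1 = c2"
proof -
  have "int n dvd ((int A - int c2 - uu A c2) - (int A - int c1 - uu A c1))" using uu_dvd[of A c2] uu_dvd[of A c1] by (rule dvd_diff)
  then have "int n dvd (int c1 - int c2)" using assms(3) by simp
  then show ?thesis by (rule eq_of_dvd_pos) (use assms in auto)
qed

lemma no_hom:
  assumes "a \<in> {1..n}" "b \<in> {1..n}" "a \<noteq> b" "1 \<le> k" "k \<le> int (L a)" "k \<le> int (L b)"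
    "int (L a) + int (L b) < k + int d * int n + 1" "int n dvd (int a + k - int b - int (L b))"
  shows False
proof -
  have fa: "fst (obj_top S a) = a" by (rule obj(2)[OF assms(1)])
  have fb: "fst (obj_top S b) = b" by (rule obj(2)[OF assms(2)])
  have "shom_dim n d (obj_top S a) (obj_top S b) \<noteq> 0"
  proof (rule hom_nz_int[where k=k])
    show "int n dvd int (fst (obj_top S a)) + k - int (fst (obj_top S b)) - int (snd (obj_top S b))"
      unfolding fa fb by (rule assms(8))
  qed (rule assms)+
  moreover have ne: "obj_top S a \<noteq> obj_top S b"
  proof
    assume "obj_top S a = obj_top S b"
    then have "fst (obj_top S a) = fst (obj_top S b)" by simp
    then show False unfolding fa fb using assms(3) by simp
  qed
  moreover have "shom_dim n d (obj_top S a) (obj_top S b) = 0"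
    by (rule S_orth[OF obj(1)[OF assms(1)] obj(1)[OF assms(2)] ne])
  ultimately show False by simp
qed

lemma tile_step:
  assumes A: "A \<in> {1..n}" "int d * int n - int n < int (L A)"
    and b: "b \<in> {1..n}" "1 \<le> uu A b" "uu A b < gg A"
  shows "L b \<le> n \<Longrightarrow> uu A (sig b) = uu A b - int (L b) + 1 \<and> 1 \<le> uu A (sig b) \<and> uu A (sig b) \<le> uu A b"
    and "\<not> L b \<le> n \<Longrightarrow> uu A (sig b) = uu A b - int (L b) + 1 + int d * int n \<and> uu A b < uu A (sig b) \<and> uu A (sig b) < gg A"
proof -
  have bA: "b \<noteq> A" using b(2) uu_self[of A] by auto
  have ggn: "gg A \<le> int n" using A(2) unfolding gg_def by linarith
  have Lb: "1 \<le> L b" "int (L b) \<le> int d * int n" using L_bounds[OF b(1)] by auto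
  have key: "\<not> (1 \<le> int (L b) - uu A b \<and> int (L b) - uu A b \<le> int (L A))"
  proof
    assume h: "1 \<le> int (L b) - uu A b \<and> int (L b) - uu A b \<le> int (L A)"
    show False
    proof (rule no_hom[OF A(1) b(1) bA[symmetric], where k="int (L b) - uu A b"])
      show "int (L A) + int (L b) < int (L b) - uu A b + int d * int n + 1" using b(3) unfolding gg_def by simp
      have "int A + (int (L b) - uu A b) - int b - int (L b) = int A - int b - uu A b" by simp
      then show "int n dvd int A + (int (L b) - uu A b) - int b - int (L b)" using uu_dvd[of A b] by (simp only:)
      show "1 \<le> int (L b) - uu A b" using h by linarith
      show "int (L b) - uu A b \<le> int (L A)" using h by linarith
      show "int (L b) - uu A b \<le> int (L b)" using uu_range(1)[of A b] by linarith
    qed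
  qed
  have sc: "int n dvd (int (sig b) - int b - int (L b) + 1)" by (rule sig_cong[OF b(1)])
  have dd: "int n dvd (int A - int b - uu A b) - (int (sig b) - int b - int (L b) + 1)"
    using uu_dvd[of A b] sc by (rule dvd_diff)
  {
    assume sh: "L b \<le> n"
    have "int (L b) \<le> int n" using sh by simp
    then have "int (L b) \<le> uu A b" using key A(2) dn2 uu_range(1)[of A b] by linarith
    moreover have "uu A (sig b) = uu A b - int (L b) + 1"
    proof (rule uu_val)
      show "int n dvd int A - int (sig b) - (uu A b - int (L b) + 1)" using dd by (simp add: algebra_simps)
      show "0 \<le> uu A b - int (L b) + 1" using calculation by linarith
      show "uu A b - int (L b) + 1 < int n" using Lb uu_range(2)[of A b] by linarith
    qed
    ultimately show "uu A (sig b) = uu A b - int (L b) + 1 \<and> 1 \<le> uu A (sig b) \<and> uu A (sig b) \<le> uu A b"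
      using Lb by linarith
  }
  {
    assume lg: "\<not> L b \<le> n"
    have "int n < int (L b)" using lg by simp
    then have "int (L A) + uu A b < int (L b)" using key uu_range(2)[of A b] by linarith
    moreover have "uu A (sig b) = uu A b - int (L b) + 1 + int d * int n"
    proof (rule uu_val)
      have "int n dvd ((int A - int b - uu A b) - (int (sig b) - int b - int (L b) + 1)) - int d * int n"
        using dd by (rule dvd_diff) simp
      then show "int n dvd int A - int (sig b) - (uu A b - int (L b) + 1 + int d * int n)" by (simp add: algebra_simps)
      show "0 \<le> uu A b - int (L b) + 1 + int d * int n" using Lb uu_range(1)[of A b] by linarith
      show "uu A b - int (L b) + 1 + int d * int n < int n" using calculation ggn unfolding gg_def by linarith
    qed
    ultimately show "uu A (sig b) = uu A b - int (L b) + 1 + int d * int n \<and> uu A b < uu A (sig b) \<and> uu A (sig b) < gg A"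
      using Lb unfolding gg_def by linarith
  }
qed


lemma Lpos: "a \<in> {1..n} \<Longrightarrow> 1 \<le> int (L a)" using L_bounds by force

lemma trap_step:
  assumes A: "A \<in> {1..n}" "int d * int n - int n < int (L A)"
    and x: "x \<in> {1..n}" "1 \<le> uu A x" "uu A x < gg A" "L x \<le> n"
    and c: "c \<in> {1..n}" "c \<noteq> x" "uu A (sig x) \<le> uu A c" "uu A c \<le> uu A x"
  shows "uu A (sig x) \<le> uu A (sig c) \<and> uu A (sig c) \<le> uu A x"
proof -
  have tx: "uu A (sig x) = uu A x - int (L x) + 1 \<and> 1 \<le> uu A (sig x) \<and> uu A (sig x) \<le> uu A x"
    by (rule tile_step(1)[OF A x(1-3) x(4)])
  have c1: "1 \<le> uu A c" using tx c(3) by linarith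
  have c2: "uu A c < gg A" using c(4) x(3) by linarith
  have Lx: "int (L x) \<le> int n" using x(4) by simp
  have sx: "int n dvd (int (sig x) - int x - int (L x) + 1)" by (rule sig_cong[OF x(1)])
  have dv: "int n dvd int c + (uu A c - uu A (sig x) + 1) - int x - int (L x)"
  proof -
    have eq: "int c + (uu A c - uu A (sig x) + 1) - int x - int (L x) = 
        (- (int A - int c - uu A c) + (int A - int (sig x) - uu A (sig x))) + (int (sig x) - int x - int (L x) + 1)" by simp
    have h1: "int n dvd - (int A - int c - uu A c)" using uu_dvd[of A c] by (simp only: dvd_minus_iff)
    show ?thesis unfolding eq by (rule dvd_add[OF dvd_add[OF h1 uu_dvd[of A "sig x"]] sx])
  qed
  show ?thesis
  proof (cases "L c \<le> n")
    case True
    have tc: "uu A (sig c) = uu A c - int (L c) + 1 \<and> 1 \<le> uu A (sig c) \<and> uu A (sig c) \<le> uu A c"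
      by (rule tile_step(1)[OF A c(1) c1 c2 True])
    have Lc: "int (L c) \<le> int n" using True by simp
    have "uu A (sig x) \<le> uu A (sig c)"
    proof (rule ccontr)
      assume lt: "\<not> uu A (sig x) \<le> uu A (sig c)"
      show False
      proof (rule no_hom[OF c(1) x(1) c(2), where k="uu A c - uu A (sig x) + 1"])
        show "1 \<le> uu A c - uu A (sig x) + 1" using c(3) by linarith
        show "uu A c - uu A (sig x) + 1 \<le> int (L c)" using lt tc by linarith
        show "uu A c - uu A (sig x) + 1 \<le> int (L x)" using tx c(4) by linarith
        show "int (L c) + int (L x) < uu A c - uu A (sig x) + 1 + int d * int n + 1"
          using Lc Lx dn2 c(3) by linarith
        show "int n dvd int c + (uu A c - uu A (sig x) + 1) - int x - int (L x)" by (rule dv)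
      qed
    qed
    then show ?thesis using tc c(4) by linarith
  next
    case False
    have tc: "uu A (sig c) = uu A c - int (L c) + 1 + int d * int n \<and> uu A c < uu A (sig c) \<and> uu A (sig c) < gg A"
      by (rule tile_step(2)[OF A c(1) c1 c2 False])
    have Lc: "int n < int (L c)" using False by simp
    have "uu A (sig c) \<le> uu A x"
    proof (rule ccontr)
      assume lt: "\<not> uu A (sig c) \<le> uu A x"
      show False
      proof (rule no_hom[OF c(1) x(1) c(2), where k="uu A c - uu A (sig x) + 1"])
        show "1 \<le> uu A c - uu A (sig x) + 1" using c(3) by linarith
        show "uu A c - uu A (sig x) + 1 \<le> int (L c)" using tx c(4) Lx Lc by linarith
        show "uu A c - uu A (sig x) + 1 \<le> int (L x)" using tx c(4) by linarith
        show "int (L c) + int (L x) < uu A c - uu A (sig x) + 1 + int d * int n + 1"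
          using tx tc lt by linarith
        show "int n dvd int c + (uu A c - uu A (sig x) + 1) - int x - int (L x)" by (rule dv)
      qed
    qed
    then show ?thesis using tc c(3) by linarith
  qed
qed

lemma trap:
  assumes A: "A \<in> {1..n}" "int d * int n - int n < int (L A)"
    and x: "x \<in> {1..n}" "1 \<le> uu A x" "uu A x < gg A" "L x \<le> n"
  shows "uu A (sig x) \<le> uu A ((sig ^^ k) x) \<and> uu A ((sig ^^ k) x) \<le> uu A x"
proof (induction k)
  case 0
  have "uu A (sig x) \<le> uu A x" using tile_step(1)[OF A x(1-3) x(4)] by linarith
  then show ?case by simp
next
  case (Suc k)
  let ?c = "(sig ^^ k) x"
  have cr: "?c \<in> {1..n}" by (rule pow_range[OF x(1)])
  show ?case
  proof (cases "?c = x")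
    case True
    have "uu A (sig x) \<le> uu A x" using tile_step(1)[OF A x(1-3) x(4)] by linarith
    then show ?thesis using True by simp
  next
    case False
    have "uu A (sig x) \<le> uu A (sig ?c) \<and> uu A (sig ?c) \<le> uu A x"
      by (rule trap_step[OF A x cr False]) (use Suc.IH in auto)
    then show ?thesis by simp
  qed
qed

lemma confine:
  assumes A: "A \<in> {1..n}" "int d * int n - int n < int (L A)"
    and s: "s \<in> {1..n}" "1 \<le> uu A s" "uu A s < gg A"
  shows "1 \<le> uu A ((sig ^^ k) s) \<and> uu A ((sig ^^ k) s) < gg A"
proof (induction k)
  case 0 then show ?case using s by simp
next
  case (Suc k)
  let ?c = "(sig ^^ k) s"
  have cr: "?c \<in> {1..n}" by (rule pow_range[OF s(1)])
  have c1: "1 \<le> uu A ?c" "uu A ?c < gg A" using Suc.IH by auto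
  show ?case
  proof (cases "L ?c \<le> n")
    case True
    show ?thesis using tile_step(1)[OF A cr c1 True] c1 by simp
  next
    case False
    show ?thesis using tile_step(2)[OF A cr c1 False] c1 by simp
  qed
qed

lemma cover:
  assumes i: "i \<in> {1..n}" and lg: "\<And>k. int d * int n - int n < int (L ((sig ^^ k) i))"
    and c: "c \<in> {1..n}" "\<And>k. (sig ^^ k) i \<noteq> c"
  shows "\<exists>j. 1 \<le> uu ((sig ^^ j) i) c \<and> uu ((sig ^^ j) i) c < gg ((sig ^^ j) i)"
proof -
  define a where "a k = (sig ^^ k) i" for k
  define G where "G k = (\<Sum>t<k. gg (a t))" for k
  have ar: "a k \<in> {1..n}" for k unfolding a_def by (rule pow_range[OF i])
  have g1: "1 \<le> gg (a k)" for k using L_bounds(3)[OF ar[of k]] unfolding gg_def by linarith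
  have gn: "gg (a k) \<le> int n" for k using lg[of k] unfolding gg_def a_def by linarith
  have Gs: "G (Suc k) = G k + gg (a k)" for k unfolding G_def by simp
  have G0: "G 0 = 0" unfolding G_def by simp
  have Gk: "int k \<le> G k" for k
  proof (induction k)
    case 0 then show ?case using G0 by simp
  next
    case (Suc k) then show ?case using Gs[of k] g1[of k] by simp
  qed
  have cong: "int n dvd (int (a k) - int i + G k)" for k
  proof (induction k)
    case 0 then show ?case unfolding a_def G_def by simp
  next
    case (Suc k)
    have sc: "int n dvd (int (sig (a k)) - int (a k) - int (L (a k)) + 1)" by (rule sig_cong[OF ar])
    have dn: "int n dvd int d * int n" by simp
    have as: "a (Suc k) = sig (a k)" unfolding a_def by simp
    have eq: "int (a (Suc k)) - int i + G (Suc k) = (int (sig (a k)) - int (a k) - int (L (a k)) + 1) + (int (a k) - int i + G k) + int d * int n"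
      unfolding Gs gg_def as by simp
    show ?case unfolding eq by (rule dvd_add[OF dvd_add[OF sc Suc.IH] dn])
  qed
  define D where "D = (int i - int c) mod int n"
  have D0: "0 \<le> D" "D < int n" unfolding D_def using n_pos by auto
  have Ddvd: "int n dvd (int i - int c - D)" unfolding D_def by (rule dvd_minus_mod)
  have find: "D < G m \<Longrightarrow> \<exists>j<m. G j \<le> D \<and> D < G (Suc j)" for m
  proof (induction m)
    case 0 then show ?case using G0 D0 by simp
  next
    case (Suc m)
    show ?case
    proof (cases "D < G m")
      case True then obtain j where "j < m" "G j \<le> D \<and> D < G (Suc j)" using Suc.IH by blast
      then show ?thesis by (intro exI[of _ j]) simp
    next
      case False then show ?thesis using Suc.prems by (intro exI[of _ m]) simp
    qed
  qed
  have "D < G n" using Gk[of n] D0 by linarith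
  then obtain j where j: "G j \<le> D" "D < G (Suc j)" using find by blast
  have uv: "uu (a j) c = D - G j"
  proof (rule uu_val)
    have eq: "int (a j) - int c - (D - G j) = (int (a j) - int i + G j) + (int i - int c - D)" by simp
    show "int n dvd int (a j) - int c - (D - G j)" unfolding eq by (rule dvd_add[OF cong Ddvd])
    show "0 \<le> D - G j" using j by linarith
    show "D - G j < int n" using j Gs[of j] gn[of j] by linarith
  qed
  have "uu (a j) c \<noteq> 0"
  proof
    assume "uu (a j) c = 0"
    then have "uu (a j) c = uu (a j) (a j)" using uu_self by simp
    then have "c = a j" using uu_inj c(1) ar by blast
    then show False using c(2) unfolding a_def by metis
  qed
  then have "1 \<le> uu (a j) c \<and> uu (a j) c < gg (a j)" using uv j Gs[of j] by auto
  then show ?thesis unfolding a_def by blast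
qed

lemma reach:
  assumes s: "s \<in> {1..n}" and t1: "t1 < orbit_size n S s"
  shows "(sig ^^ (t2 + orbit_size n S s - t1)) ((sig ^^ t1) s) = (sig ^^ t2) s"
proof -
  let ?q = "orbit_size n S s"
  have "(sig ^^ (t2 + ?q - t1)) ((sig ^^ t1) s) = (sig ^^ (t2 + ?q - t1 + t1)) s" using pow_split by simp
  also have "t2 + ?q - t1 + t1 = t2 + ?q" using t1 by simp
  also have "(sig ^^ (t2 + ?q)) s = (sig ^^ t2) ((sig ^^ ?q) s)" by (rule pow_split)
  also have "\<dots> = (sig ^^ t2) s" using os_props(2)[OF s] by simp
  finally show ?thesis .
qed

lemma uniq_short:
  assumes A: "A \<in> {1..n}" "int d * int n - int n < int (L A)"
    and s: "s \<in> {1..n}" and conf: "\<And>k. 1 \<le> uu A ((sig ^^ k) s) \<and> uu A ((sig ^^ k) s) < gg A"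
    and t: "t1 < orbit_size n S s" "t2 < orbit_size n S s"
    and sh: "L ((sig ^^ t1) s) \<le> n" "L ((sig ^^ t2) s) \<le> n"
  shows "t1 = t2"
proof -
  have le: "uu A ((sig ^^ tb) s) \<le> uu A ((sig ^^ ta) s)"
    if ta: "ta < orbit_size n S s" and shA: "L ((sig ^^ ta) s) \<le> n" for ta tb
  proof -
    have c1: "1 \<le> uu A ((sig ^^ ta) s)" "uu A ((sig ^^ ta) s) < gg A" using conf[of ta] by auto
    have "uu A ((sig ^^ (tb + orbit_size n S s - ta)) ((sig ^^ ta) s)) \<le> uu A ((sig ^^ ta) s)"
      using trap[OF A pow_range[OF s] c1 shA] by blast
    then show ?thesis using reach[OF s ta] by simp
  qed
  have "uu A ((sig ^^ t1) s) = uu A ((sig ^^ t2) s)" using le[OF t(1) sh(1), of t2] le[OF t(2) sh(2), of t1] by linarith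
  then have "(sig ^^ t1) s = (sig ^^ t2) s" using uu_inj pow_range[OF s] by blast
  then show ?thesis using pow_distinct[OF s t] by blast
qed

end

theorem lemma4p7:
  fixes n d i :: nat and S :: "nmod set"
  assumes "1 \<le> n" and "2 \<le> d"
    and "is_sms n d S"
    and "i \<in> {1..n}"
    and "\<forall>j. j \<le> orbit_size n S i - 1 \<longrightarrow> lval n S i j = d - 1"
  shows "\<forall>s\<in>{1..n}. sorbit n S s \<noteq> sorbit n S i \<longrightarrow>
           (\<exists>!t. t \<le> orbit_size n S s - 1 \<and> lval n S s t = 0)"
proof -
  interpret smsctx n d S by unfold_locales (use assms in auto)
  have i: "i \<in> {1..n}" by (rule assms(4))
  let ?p = "orbit_size n S i"
  have lv0: "lval n S s t = 0 \<longleftrightarrow> L ((sig ^^ t) s) \<le> n" if s: "s \<in> {1..n}" for s t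
  proof -
    have "1 \<le> L ((sig ^^ t) s)" using L_bounds(1)[OF pow_range[OF s]] by blast
    then show ?thesis unfolding lval_def tmult_def using n1 by (auto simp: div_eq_0_iff)
  qed
  have lg: "int d * int n - int n < int (L ((sig ^^ k) i))" for k
  proof -
    have p0: "0 < ?p" by (rule os_props(1)[OF i])
    have km: "k mod ?p \<le> ?p - 1" using p0 by (metis Suc_pred' less_Suc_eq_le mod_less_divisor)
    have "lval n S i (k mod ?p) = d - 1" using assms(5) km by blast
    then have "lval n S i k = d - 1" unfolding lval_def using pow_mod[OF i, of k] by simp
    then have "\<not> L ((sig ^^ k) i) \<le> n" using lv0[OF i, of k] assms(2) by auto
    then show ?thesis using dich[OF pow_range[OF i]] by auto
  qed
  show ?thesis
  proof (intro ballI impI)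
    fix s assume s: "s \<in> {1..n}" and so: "sorbit n S s \<noteq> sorbit n S i"
    have sep: "(sig ^^ k) i \<noteq> s" for k by (rule orbit_sep[OF i so])
    obtain j where j: "1 \<le> uu ((sig ^^ j) i) s" "uu ((sig ^^ j) i) s < gg ((sig ^^ j) i)"
      using cover[OF i lg s sep] by blast
    define A where "A = (sig ^^ j) i"
    have A: "A \<in> {1..n}" "int d * int n - int n < int (L A)" unfolding A_def using pow_range[OF i] lg by auto
    have j': "1 \<le> uu A s" "uu A s < gg A" using j unfolding A_def by auto
    have conf: "1 \<le> uu A ((sig ^^ k) s) \<and> uu A ((sig ^^ k) s) < gg A" for k
      by (rule confine[OF A s j'])
    let ?q = "orbit_size n S s"
    have q0: "0 < ?q" by (rule os_props(1)[OF s])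
    define f where "f t = uu A ((sig ^^ t) s)" for t
    have fin: "finite (f ` {..<?q})" by simp
    have ne: "f ` {..<?q} \<noteq> {}" using q0 by auto
    obtain t0 where t0: "t0 < ?q" "f t0 = Max (f ` {..<?q})" using Max_in[OF fin ne] by auto
    have t0max: "f t \<le> f t0" if "t < ?q" for t using t0(2) Max_ge[OF fin] that by simp
    have short: "L ((sig ^^ t0) s) \<le> n"
    proof (rule ccontr)
      assume nl: "\<not> L ((sig ^^ t0) s) \<le> n"
      have c1: "1 \<le> uu A ((sig ^^ t0) s)" "uu A ((sig ^^ t0) s) < gg A" using conf[of t0] by auto
      have "uu A ((sig ^^ t0) s) < uu A (sig ((sig ^^ t0) s))"
        using tile_step(2)[OF A pow_range[OF s] c1 nl] by blast
      moreover have "sig ((sig ^^ t0) s) = (sig ^^ (Suc t0 mod ?q)) s" using pow_mod[OF s, of "Suc t0"] by simp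
      moreover have "Suc t0 mod ?q < ?q" using q0 by simp
      ultimately show False using t0max[of "Suc t0 mod ?q"] unfolding f_def by simp
    qed
    show "\<exists>!t. t \<le> ?q - 1 \<and> lval n S s t = 0"
    proof (rule ex1I[of _ t0])
      show "t0 \<le> ?q - 1 \<and> lval n S s t0 = 0" using t0(1) short lv0[OF s] by auto
    next
      fix t assume t: "t \<le> ?q - 1 \<and> lval n S s t = 0"
      have tq: "t < ?q" using t q0 by linarith
      have sht: "L ((sig ^^ t) s) \<le> n" using t lv0[OF s] by blast
      show "t = t0" by (rule uniq_short[OF A s conf tq t0(1) sht short])
    qed
  qed
qed

end
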